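(* Let the binary predicate symbols be $\mathcal F=\{f,g,h\}$ (with arbitrary unary symbols), and for a variable $x$ define $P_f(x):=\exists^{=1}y.f(x,y)\wedge\exists^{=0}y.(g(x,y)\vee h(x,y))$, $P_g(x):=\exists^{=1}y.g(x,y)\wedge\exists^{=0}y.(f(x,y)\vee h(x,y))$, and $P_{fg}(x):=\exists^{=1}y.f(x,y)\wedge\exists^{=1}y.g(x,y)\wedge\exists^{=0}y.h(x,y)$. Then (a) $P_{fg}\sim P_f*P_g$, and (b) $P_{fg}$ is not equivalent to any boolean combination of $P_f$ and $P_g$.
   Context: Environments: finite nonempty domain $D$, interpretations of unary predicates as subsets of $D$ and of $f,g,h$ as subsets of $D\times D$, and an assignment of elements to variables. $\exists^{=k}y.G$ means exactly $k$ elements $y$ satisfy $G$. $[\![G_1*G_2]\!]e$ holds iff there are environments $e_1,e_2$ with the same domain and variable assignment such that each predicate symbol's interpretation in $e$ is the disjoint union of its interpretations in $e_1,e_2$, and $G_1$ holds in $e_1$, $G_2$ in $e_2$. $G\sim H$ means equal truth values in all environments. *)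

theory Defs
  imports Main
begin

datatype binsym = Fs | Gs | Hs

record ('a, 'u, 'v) env =
  dom :: "'a set"
  un  :: "'u \<Rightarrow> 'a set"
  bin :: "binsym \<Rightarrow> ('a \<times> 'a) set"
  asg :: "'v \<Rightarrow> 'a"

definition wf_env :: "('a, 'u, 'v) env \<Rightarrow> bool" where
  "wf_env e \<longleftrightarrow> finite (dom e) \<and> dom e \<noteq> {} \<and>
     (\<forall>u. un e u \<subseteq> dom e) \<and> (\<forall>s. bin e s \<subseteq> dom e \<times> dom e) \<and>
     (\<forall>v. asg e v \<in> dom e)"

text \<open>Formulas are identified with their semantics: predicates on environments.\<close>
type_synonym ('a, 'u, 'v) form = "('a, 'u, 'v) env \<Rightarrow> bool"

definition ex_eq :: "nat \<Rightarrow> 'v \<Rightarrow> ('a, 'u, 'v) form \<Rightarrow> ('a, 'u, 'v) form" where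
  "ex_eq k y G e \<longleftrightarrow> card {d \<in> dom e. G (e\<lparr>asg := (asg e)(y := d)\<rparr>)} = k"

definition atom :: "binsym \<Rightarrow> 'v \<Rightarrow> 'v \<Rightarrow> ('a, 'u, 'v) form" where
  "atom s x y e \<longleftrightarrow> (asg e x, asg e y) \<in> bin e s"

definition star :: "('a, 'u, 'v) form \<Rightarrow> ('a, 'u, 'v) form \<Rightarrow> ('a, 'u, 'v) form" where
  "star G1 G2 e \<longleftrightarrow> (\<exists>e1 e2. wf_env e1 \<and> wf_env e2 \<and>
     dom e1 = dom e \<and> dom e2 = dom e \<and> asg e1 = asg e \<and> asg e2 = asg e \<and>
     (\<forall>u. un e u = un e1 u \<union> un e2 u \<and> un e1 u \<inter> un e2 u = {}) \<and>
     (\<forall>s. bin e s = bin e1 s \<union> bin e2 s \<and> bin e1 s \<inter> bin e2 s = {}) \<and>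
     G1 e1 \<and> G2 e2)"

definition fequiv :: "('a, 'u, 'v) form \<Rightarrow> ('a, 'u, 'v) form \<Rightarrow> bool" where
  "fequiv G H \<longleftrightarrow> (\<forall>e. wf_env e \<longrightarrow> (G e \<longleftrightarrow> H e))"

text \<open>The bound variable y is taken distinct from x.\<close>
definition P_f :: "'v \<Rightarrow> 'v \<Rightarrow> ('a, 'u, 'v) form" where
  "P_f x y e \<longleftrightarrow> ex_eq 1 y (atom Fs x y) e \<and>
                  ex_eq 0 y (\<lambda>e'. atom Gs x y e' \<or> atom Hs x y e') e"

definition P_g :: "'v \<Rightarrow> 'v \<Rightarrow> ('a, 'u, 'v) form" where
  "P_g x y e \<longleftrightarrow> ex_eq 1 y (atom Gs x y) e \<and>
                  ex_eq 0 y (\<lambda>e'. atom Fs x y e' \<or> atom Hs x y e') e"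

definition P_fg :: "'v \<Rightarrow> 'v \<Rightarrow> ('a, 'u, 'v) form" where
  "P_fg x y e \<longleftrightarrow> ex_eq 1 y (atom Fs x y) e \<and> ex_eq 1 y (atom Gs x y) e \<and>
                   ex_eq 0 y (atom Hs x y) e"

end

theory Submission
  imports Defs
begin

definition succ :: "('a,'u,'v) env \<Rightarrow> binsym \<Rightarrow> 'v \<Rightarrow> 'a set" where
  "succ e s x = {d \<in> dom e. (asg e x, d) \<in> bin e s}"

lemma ex_atom:
  assumes "x \<noteq> y"
  shows "ex_eq k y (atom s x y) e \<longleftrightarrow> card (succ e s x) = k"
  using assms unfolding ex_eq_def atom_def succ_def by simp

lemma ex_atom2:
  assumes "x \<noteq> y"
  shows "ex_eq k y (\<lambda>e'. atom s x y e' \<or> atom t x y e') e \<longleftrightarrow> card (succ e s x \<union> succ e t x) = k"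
proof -
  have "{d \<in> dom e. (\<lambda>e'. atom s x y e' \<or> atom t x y e') (e\<lparr>asg := (asg e)(y := d)\<rparr>)}
        = succ e s x \<union> succ e t x"
    using assms unfolding atom_def succ_def by auto
  then show ?thesis unfolding ex_eq_def by simp
qed

lemma succ_fin: "wf_env e \<Longrightarrow> finite (succ e s x)"
  unfolding wf_env_def succ_def by auto

lemma Pf_iff: "x \<noteq> y \<Longrightarrow> wf_env e \<Longrightarrow> P_f x y e \<longleftrightarrow>
   card (succ e Fs x) = 1 \<and> succ e Gs x = {} \<and> succ e Hs x = {}"
  unfolding P_f_def ex_atom ex_atom2 using succ_fin[of e] by (simp add: card_0_eq)

lemma Pg_iff: "x \<noteq> y \<Longrightarrow> wf_env e \<Longrightarrow> P_g x y e \<longleftrightarrow>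
   card (succ e Gs x) = 1 \<and> succ e Fs x = {} \<and> succ e Hs x = {}"
  unfolding P_g_def ex_atom ex_atom2 using succ_fin[of e] by (simp add: card_0_eq)

lemma Pfg_iff: "x \<noteq> y \<Longrightarrow> wf_env e \<Longrightarrow> P_fg x y e \<longleftrightarrow>
   card (succ e Fs x) = 1 \<and> card (succ e Gs x) = 1 \<and> succ e Hs x = {}"
  unfolding P_fg_def ex_atom using succ_fin[of e] by (simp add: card_0_eq)

theorem mainTheorem13:
  fixes x y :: 'v
  assumes "x \<noteq> y"
  shows "fequiv (P_fg x y :: ('a, 'u, 'v) form) (star (P_f x y) (P_g x y))
       \<and> \<not> (\<exists>b :: bool \<Rightarrow> bool \<Rightarrow> bool.
              fequiv (P_fg x y :: ('a, 'u, 'v) form) (\<lambda>e. b (P_f x y e) (P_g x y e)))"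
proof
  show "fequiv (P_fg x y :: ('a, 'u, 'v) form) (star (P_f x y) (P_g x y))"
    unfolding fequiv_def
  proof (intro allI impI)
    fix e :: "('a,'u,'v) env"
    assume wf: "wf_env e"
    show "P_fg x y e = star (P_f x y) (P_g x y) e"
    proof
      assume H: "P_fg x y e"
      define B2 where "B2 = (\<lambda>s. if s = Gs then {p \<in> bin e Gs. fst p = asg e x} else {})"
      define e1 where "e1 = e\<lparr>bin := (\<lambda>s. bin e s - B2 s)\<rparr>"
      define e2 where "e2 = e\<lparr>un := (\<lambda>_. {}), bin := B2\<rparr>"
      have w1: "wf_env e1" using wf unfolding e1_def wf_env_def by auto
      have w2: "wf_env e2" using wf unfolding e2_def wf_env_def B2_def by auto
      have s1: "succ e1 s x = (if s = Gs then {} else succ e s x)" for s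
        unfolding e1_def succ_def B2_def by auto
      have s2: "succ e2 s x = (if s = Gs then succ e Gs x else {})" for s
        unfolding e2_def succ_def B2_def by auto
      have pf: "P_f x y e1" using Pf_iff[OF assms w1] s1 Pfg_iff[OF assms wf] H by simp
      have pg: "P_g x y e2" using Pg_iff[OF assms w2] s2 Pfg_iff[OF assms wf] H by simp
      have bb: "\<forall>s. bin e s = bin e1 s \<union> bin e2 s \<and> bin e1 s \<inter> bin e2 s = {}"
      proof
        fix s show "bin e s = bin e1 s \<union> bin e2 s \<and> bin e1 s \<inter> bin e2 s = {}"
          unfolding e1_def e2_def B2_def by (cases s) auto
      qed
      show "star (P_f x y) (P_g x y) e"
      proof -
        have "dom e1 = dom e" "dom e2 = dom e" "asg e1 = asg e" "asg e2 = asg e"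
          "\<forall>u. un e u = un e1 u \<union> un e2 u \<and> un e1 u \<inter> un e2 u = {}"
          unfolding e1_def e2_def by simp_all
        then show ?thesis unfolding star_def using w1 w2 pf pg bb by blast
      qed
    next
      assume "star (P_f x y) (P_g x y) e"
      then obtain e1 e2 :: "('a,'u,'v) env" where w1: "wf_env e1" and w2: "wf_env e2"
        and d1: "dom e1 = dom e" and d2: "dom e2 = dom e"
        and a1: "asg e1 = asg e" and a2: "asg e2 = asg e"
        and b: "\<forall>s. bin e s = bin e1 s \<union> bin e2 s"
        and p1: "P_f x y e1" and p2: "P_g x y e2"
        unfolding star_def by blast
      have su: "succ e s x = succ e1 s x \<union> succ e2 s x" for s
        using b d1 d2 a1 a2 unfolding succ_def by auto
      show "P_fg x y e"
        using Pfg_iff[OF assms wf] Pf_iff[OF assms w1] Pg_iff[OF assms w2] p1 p2 su by simp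
    qed
  qed
next
  show "\<not> (\<exists>b :: bool \<Rightarrow> bool \<Rightarrow> bool.
              fequiv (P_fg x y :: ('a, 'u, 'v) form) (\<lambda>e. b (P_f x y e) (P_g x y e)))"
  proof
    assume "\<exists>b :: bool \<Rightarrow> bool \<Rightarrow> bool.
              fequiv (P_fg x y :: ('a, 'u, 'v) form) (\<lambda>e. b (P_f x y e) (P_g x y e))"
    then obtain b :: "bool \<Rightarrow> bool \<Rightarrow> bool" where
      fe: "fequiv (P_fg x y :: ('a, 'u, 'v) form) (\<lambda>e. b (P_f x y e) (P_g x y e))" by blast
    define a :: 'a where "a = undefined"
    define e0 :: "('a,'u,'v) env" where
      "e0 = \<lparr>dom = {a}, un = (\<lambda>_. {}), bin = (\<lambda>_. {}), asg = (\<lambda>_. a)\<rparr>"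
    define e1 :: "('a,'u,'v) env" where
      "e1 = \<lparr>dom = {a}, un = (\<lambda>_. {}), bin = (\<lambda>s. if s = Hs then {} else {(a,a)}), asg = (\<lambda>_. a)\<rparr>"
    have w0: "wf_env e0" unfolding e0_def wf_env_def by auto
    have w1: "wf_env e1" unfolding e1_def wf_env_def by auto
    have s0: "succ e0 s x = {}" for s unfolding e0_def succ_def by auto
    have s1: "succ e1 s x = (if s = Hs then {} else {a})" for s unfolding e1_def succ_def by auto
    have "\<not> P_fg x y e0" "\<not> P_f x y e0" "\<not> P_g x y e0"
      using Pfg_iff[OF assms w0] Pf_iff[OF assms w0] Pg_iff[OF assms w0] s0 by auto
    moreover have "P_fg x y e1" "\<not> P_f x y e1" "\<not> P_g x y e1"
      using Pfg_iff[OF assms w1] Pf_iff[OF assms w1] Pg_iff[OF assms w1] s1 by auto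
    moreover have "P_fg x y e0 = b (P_f x y e0) (P_g x y e0)" using fe w0 unfolding fequiv_def by blast
    moreover have "P_fg x y e1 = b (P_f x y e1) (P_g x y e1)" using fe w1 unfolding fequiv_def by blast
    ultimately show False by simp
  qed
qed

end
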